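(* Let $w=(w_{ij})$ be an $m\times n$ matrix of positive integers and $\varepsilon_1,\dots,\varepsilon_m\in\{1,-1\}$, and suppose $L_W(z)=\sum_{i=1}^m\varepsilon_i\prod_{j=1}^n\frac{z^{w_{ij}}+1}{z^{w_{ij}}-1}$ is constant in $z$. If $L_W(z)\neq 0$, then $n$ is even.
   Context: $W=\{w,s\}$ with $s=\{\varepsilon_1,\dots,\varepsilon_m\}$; $W$ is called $L$-rigid if $L_W(z)$ does not depend on $z$. *)

theory Defs
  imports Complex_Main
begin

definition L_W :: "nat \<Rightarrow> nat \<Rightarrow> (nat \<Rightarrow> nat \<Rightarrow> nat) \<Rightarrow> (nat \<Rightarrow> int) \<Rightarrow> complex \<Rightarrow> complex" where
  "L_W m n w eps z =
     (\<Sum>i<m. of_int (eps i) * (\<Prod>j<n. (z ^ w i j + 1) / (z ^ w i j - 1)))"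

definition L_rigid_with_value :: "nat \<Rightarrow> nat \<Rightarrow> (nat \<Rightarrow> nat \<Rightarrow> nat) \<Rightarrow> (nat \<Rightarrow> int) \<Rightarrow> complex \<Rightarrow> bool" where
  "L_rigid_with_value m n w eps c \<longleftrightarrow>
     (\<forall>z. (\<forall>i<m. \<forall>j<n. z ^ w i j \<noteq> 1) \<longrightarrow> L_W m n w eps z = c)"

end

theory Submission
  imports Defs
begin

lemma factor_flip:
  fixes u :: complex
  assumes "u \<noteq> 0" "u \<noteq> 1"
  shows "(inverse u + 1) / (inverse u - 1) = - ((u + 1) / (u - 1))"
proof -
  have "u - 1 \<noteq> 0" "1 - u \<noteq> 0" using assms by auto
  then show ?thesis using assms by (simp add: field_simps)
qed

theorem mainTheorem3:
  fixes m n :: nat and w :: "nat \<Rightarrow> nat \<Rightarrow> nat" and eps :: "nat \<Rightarrow> int" and c :: complex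
  assumes "\<forall>i<m. \<forall>j<n. w i j > 0"
    and "\<forall>i<m. eps i = 1 \<or> eps i = -1"
    and "L_rigid_with_value m n w eps c"
    and "c \<noteq> 0"
  shows "even n"
proof (rule ccontr)
  assume odd: "\<not> even n"
  define z :: complex where "z = 2"
  have pow2: "(2::complex) ^ k \<noteq> 1" if "k > 0" for k :: nat
  proof -
    have "(2::real) ^ k > 1" using that by (simp add: one_less_power)
    then have "(2::real) ^ k \<noteq> 1" by simp
    then have "complex_of_real (2 ^ k) \<noteq> complex_of_real 1" by (metis of_real_eq_iff)
    then show ?thesis by simp
  qed
  have c1: "\<forall>i<m. \<forall>j<n. z ^ w i j \<noteq> 1" using assms(1) pow2 z_def by auto
  have c2: "\<forall>i<m. \<forall>j<n. (inverse z) ^ w i j \<noteq> 1"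
  proof (intro allI impI)
    fix i j assume "i < m" "j < n"
    then have "z ^ w i j \<noteq> 1" using c1 by auto
    then show "(inverse z) ^ w i j \<noteq> 1" by (metis inverse_1 inverse_inverse_eq power_inverse)
  qed
  have Lz: "L_W m n w eps z = c" using assms(3) c1 unfolding L_rigid_with_value_def by auto
  have Li: "L_W m n w eps (inverse z) = c" using assms(3) c2 unfolding L_rigid_with_value_def by auto
  have fac: "((inverse z) ^ w i j + 1) / ((inverse z) ^ w i j - 1) = - ((z ^ w i j + 1) / (z ^ w i j - 1))"
    if "i < m" "j < n" for i j
  proof -
    have "z ^ w i j \<noteq> 0" using z_def by simp
    moreover have "z ^ w i j \<noteq> 1" using c1 that by auto
    ultimately show ?thesis using factor_flip[of "z ^ w i j"] by (simp add: power_inverse)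
  qed
  have prodeq: "(\<Prod>j<n. ((inverse z) ^ w i j + 1) / ((inverse z) ^ w i j - 1))
       = (\<Prod>j<n. - ((z ^ w i j + 1) / (z ^ w i j - 1)))" if "i < m" for i
    using fac that by (intro prod.cong) auto
  have neg: "(\<Prod>j<n. - ((z ^ w i j + 1) / (z ^ w i j - 1))) = - (\<Prod>j<n. (z ^ w i j + 1) / (z ^ w i j - 1))" for i
    using odd by (simp add: prod_uminus)  
  have "L_W m n w eps (inverse z) = - L_W m n w eps z"
    unfolding L_W_def using prodeq neg by (simp add: sum_negf[symmetric])
  then have "c = - c" using Lz Li by simp
  then show False using assms(4) by simp
qed

end
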